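(* Let $f(\mathbf{x})=\mathbf{x}^{T}A\mathbf{x}+b^{T}\mathbf{x}+1$ with $A\in\mathbb{R}^{n\times n}$ symmetric and $b\in\mathbb{R}^n$. Then there exist real diagonal $2\times 2$ matrices $A_1,\dots,A_n$ with $f(\mathbf{x})=\det(I_2+x_1A_1+\dots+x_nA_n)$ if and only if $A-\frac14 bb^{T}$ is negative semidefinite and has rank at most $1$. *)

theory Defs
  imports "HOL-Analysis.Analysis"
begin

definition diagonal_mat :: "real^'m^'m \<Rightarrow> bool" where
  "diagonal_mat M \<longleftrightarrow> (\<forall>i j. i \<noteq> j \<longrightarrow> M $ i $ j = 0)"

definition neg_semidef :: "real^'n^'n \<Rightarrow> bool" where
  "neg_semidef M \<longleftrightarrow> (\<forall>v. v \<bullet> (M *v v) \<le> 0)"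

definition outer :: "real^'n \<Rightarrow> real^'n \<Rightarrow> real^'n^'n" where
  "outer u v = (\<chi> i j. u $ i * v $ j)"

end

theory Submission
  imports Defs
begin

lemma outer_mult: "outer u w *v v = (w \<bullet> v) *\<^sub>R u"
  by (simp add: vec_eq_iff outer_def matrix_vector_mult_def inner_vec_def sum_distrib_left mult_ac)

lemma mvm_uminus: "(A::real^'n^'m) *v (- x) = - (A *v x)"
  by (simp add: vec_eq_iff matrix_vector_mult_def sum_negf)

lemma transpose_outer: "transpose (outer u u) = outer u u"
  by (simp add: vec_eq_iff outer_def transpose_def mult.commute)

lemma sym_inner: "transpose (M::real^'n^'n) = M \<Longrightarrow> w \<bullet> (M *v v) = v \<bullet> (M *v w)"
  by (metis dot_lmul_matrix inner_commute transpose_matrix_vector)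

lemma sym_quad_eq:
  fixes D :: "real^'n^'n"
  assumes "transpose D = D" "\<And>v. v \<bullet> (D *v v) = 0"
  shows "D = 0"
proof -
  have "u \<bullet> (D *v v) = 0" for u v
  proof -
    have "(u+v) \<bullet> (D *v (u+v)) = 0" by (rule assms(2))
    hence "u \<bullet> (D *v v) + v \<bullet> (D *v u) = 0"
      using assms(2)[of u] assms(2)[of v]
      by (simp add: matrix_vector_right_distrib inner_add_left inner_add_right)
    with sym_inner[OF assms(1), of u v] show ?thesis by simp
  qed
  hence "D *v v = 0" for v using inner_eq_zero_iff by blast
  thus ?thesis by (intro matrix_eq[THEN iffD2]) simp
qed

lemma rank_outer: "rank (k *\<^sub>R outer (d::real^'n) d) \<le> 1"
proof -
  have "range (\<lambda>x. (k *\<^sub>R outer d d) *v x) \<subseteq> span {d}"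
    by (auto simp: scaleR_matrix_vector_assoc[symmetric] outer_mult span_singleton)
  hence "dim (range (\<lambda>x. (k *\<^sub>R outer d d) *v x)) \<le> dim (span {d})" by (rule dim_subset)
  also have "\<dots> \<le> 1" by simp
  finally show ?thesis by (simp add: rank_dim_range)
qed

lemma rank1_decomp:
  fixes M :: "real^'n^'n"
  assumes sym: "transpose M = M" and nsd: "neg_semidef M" and rk: "rank M \<le> 1"
  shows "\<exists>d. \<forall>v. M *v v = - ((d \<bullet> v) *\<^sub>R d)"
proof (cases "\<forall>v. M *v v = 0")
  case True
  then show ?thesis by (intro exI[of _ 0]) simp
next
  case False
  then obtain v0 where "M *v v0 \<noteq> 0" by blast
  define u where "u = M *v v0"
  have u0: "u \<noteq> 0" using \<open>M *v v0 \<noteq> 0\<close> u_def by simp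
  have "M *v v \<in> span {u}" for v
  proof (rule ccontr)
    assume nin: "M *v v \<notin> span {u}"
    have ind: "independent {M *v v, u}"
      using nin u0 by (intro independent_insertI) (auto simp: independent_empty)
    have ne: "M *v v \<noteq> u" using nin span_base[of u "{u}"] by auto
    have "card {M *v v, u} \<le> dim (range (\<lambda>x. M *v x))"
      by (rule independent_card_le_dim[OF _ ind]) (auto simp: u_def)
    with ne rk show False by (simp add: rank_dim_range)
  qed
  hence "\<forall>v. \<exists>k. M *v v = k *\<^sub>R u" by (auto simp: span_singleton)
  then obtain phi where phi: "\<And>v. M *v v = phi v *\<^sub>R u" by metis
  have key: "phi v * (u \<bullet> u) = phi u * (v \<bullet> u)" for v
    using sym_inner[OF sym, of u v] phi[of u] phi[of v] by simp
  define c where "c = phi u / (u \<bullet> u)"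
  have uu: "u \<bullet> u > 0" using u0 by simp
  have Mv: "M *v v = (c * (u \<bullet> v)) *\<^sub>R u" for v
  proof -
    have "phi v = c * (u \<bullet> v)" using key[of v] uu
      by (simp add: c_def field_simps inner_commute)
    thus ?thesis using phi by simp
  qed
  have "u \<bullet> (M *v u) \<le> 0" using nsd by (simp add: neg_semidef_def)
  hence "c * (u \<bullet> u) * (u \<bullet> u) \<le> 0" using Mv[of u] by (simp add: mult_ac)
  hence c0: "c \<le> 0" using uu by (simp add: mult_le_0_iff)
  define d where "d = sqrt (-c) *\<^sub>R u"
  have "M *v v = - ((d \<bullet> v) *\<^sub>R d)" for v
    using c0 by (simp add: Mv d_def algebra_simps)
  thus ?thesis by blast
qed


lemma det_diag_sum:
  fixes As :: "'n::finite \<Rightarrow> real^2^2"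
  assumes "\<forall>i. diagonal_mat (As i)"
  shows "det (mat 1 + (\<Sum>i\<in>UNIV. x $ i *\<^sub>R As i))
    = (1 + (\<chi> i. As i $ 1 $ 1) \<bullet> x) * (1 + (\<chi> i. As i $ 2 $ 2) \<bullet> x)"
proof -
  have z: "As i $ 1 $ 2 = 0" "As i $ 2 $ 1 = 0" for i
    using assms by (auto simp: diagonal_mat_def)
  show ?thesis
    by (simp add: det_2 sum_component mat_def z inner_vec_def mult.commute)
qed

theorem mainTheorem3:
  fixes A :: "real^'n^'n" and b :: "real^'n"
  assumes "transpose A = A"
  shows "(\<exists>As :: 'n \<Rightarrow> real^2^2. (\<forall>i. diagonal_mat (As i)) \<and>
            (\<forall>x :: real^'n. x \<bullet> (A *v x) + b \<bullet> x + 1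
               = det (mat 1 + (\<Sum>i\<in>UNIV. x $ i *\<^sub>R As i))))
         \<longleftrightarrow> (neg_semidef (A - (1/4) *\<^sub>R outer b b) \<and> rank (A - (1/4) *\<^sub>R outer b b) \<le> 1)"
proof -
  define M where "M = A - (1/4) *\<^sub>R outer b b"
  have Mv: "M *v v = A *v v - ((1/4) * (b \<bullet> v)) *\<^sub>R b" for v
    by (simp add: M_def matrix_vector_mult_diff_rdistrib scaleR_matrix_vector_assoc[symmetric] outer_mult)
  have Msym: "transpose M = M"
    using assms by (simp add: M_def vec_eq_iff transpose_def outer_def mult.commute)
  have quadM: "v \<bullet> (M *v v) = v \<bullet> (A *v v) - (1/4) * (b \<bullet> v)^2" for v
    by (simp add: Mv inner_diff_right power2_eq_square inner_commute)
  show ?thesis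
  proof
    assume "\<exists>As :: 'n \<Rightarrow> real^2^2. (\<forall>i. diagonal_mat (As i)) \<and>
            (\<forall>x :: real^'n. x \<bullet> (A *v x) + b \<bullet> x + 1
               = det (mat 1 + (\<Sum>i\<in>UNIV. x $ i *\<^sub>R As i)))"
    then obtain As :: "'n \<Rightarrow> real^2^2" where D: "\<forall>i. diagonal_mat (As i)"
      and H0: "\<forall>x :: real^'n. x \<bullet> (A *v x) + b \<bullet> x + 1
               = det (mat 1 + (\<Sum>i\<in>UNIV. x $ i *\<^sub>R As i))" by blast
    define a where "a = (\<chi> i. As i $ 1 $ 1)"
    define c where "c = (\<chi> i. As i $ 2 $ 2)"
    have H: "x \<bullet> (A *v x) + b \<bullet> x + 1 = (1 + a \<bullet> x) * (1 + c \<bullet> x)" for x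
      using H0 det_diag_sum[OF D, of x] by (simp add: a_def c_def)
    have quad: "x \<bullet> (A *v x) = (a \<bullet> x) * (c \<bullet> x)" and lin: "b \<bullet> x = (a + c) \<bullet> x" for x
    proof -
      have 1: "x \<bullet> (A *v x) + b \<bullet> x + 1 = (1 + a \<bullet> x) * (1 + c \<bullet> x)" by (rule H)
      have 2: "x \<bullet> (A *v x) - b \<bullet> x + 1 = (1 - a \<bullet> x) * (1 - c \<bullet> x)"
        using H[of "-x"] by (simp add: mvm_uminus)
      from 1 2 show "x \<bullet> (A *v x) = (a \<bullet> x) * (c \<bullet> x)" by (simp add: algebra_simps)
      from 1 2 show "b \<bullet> x = (a + c) \<bullet> x" by (simp add: algebra_simps inner_add_left)
    qed
    have bac: "b = a + c"
      proof -
      have "(b - (a + c)) \<bullet> (b - (a + c)) = 0"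
        using lin[of "b - (a + c)"] by (simp only: inner_diff_left)
      thus ?thesis by simp
    qed
    define d where "d = a - c"
    have qM: "v \<bullet> (M *v v) = - (1/4) * (d \<bullet> v)^2" for v
      by (simp add: quadM quad bac d_def inner_add_left inner_diff_left power2_eq_square algebra_simps)
    have nsd: "neg_semidef M" by (simp add: neg_semidef_def qM)
    have "M - (-(1/4)) *\<^sub>R outer d d = 0"
    proof (rule sym_quad_eq)
      show "transpose (M - (-(1/4)) *\<^sub>R outer d d) = M - (-(1/4)) *\<^sub>R outer d d"
        using Msym by (simp add: vec_eq_iff transpose_def outer_def mult.commute)
      show "v \<bullet> ((M - (-(1/4)) *\<^sub>R outer d d) *v v) = 0" for v
        by (simp add: matrix_vector_mult_diff_rdistrib matrix_vector_mult_add_rdistrib inner_add_right scaleR_matrix_vector_assoc[symmetric]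
            outer_mult inner_diff_right qM power2_eq_square inner_commute)
    qed
    hence "M = (-(1/4)) *\<^sub>R outer d d" by (simp add: eq_neg_iff_add_eq_0)
    hence "rank M \<le> 1" using rank_outer[of "-(1/4)" d] by (simp only:)
    with nsd show "neg_semidef (A - (1/4) *\<^sub>R outer b b) \<and> rank (A - (1/4) *\<^sub>R outer b b) \<le> 1"
      by (simp add: M_def)
  next
    assume "neg_semidef (A - (1/4) *\<^sub>R outer b b) \<and> rank (A - (1/4) *\<^sub>R outer b b) \<le> 1"
    hence "neg_semidef M" "rank M \<le> 1" by (simp_all add: M_def)
    from rank1_decomp[OF Msym this] obtain d where dM: "\<And>v. M *v v = - ((d \<bullet> v) *\<^sub>R d)" by blast
    define a where "a = (1/2) *\<^sub>R b + d"
    define c where "c = (1/2) *\<^sub>R b - d"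
    define As :: "'n \<Rightarrow> real^2^2" where
      "As = (\<lambda>i. \<chi> j k. if j = k then (if j = 1 then a $ i else c $ i) else 0)"
    have D: "\<forall>i. diagonal_mat (As i)" by (simp add: As_def diagonal_mat_def)
    have a1: "(\<chi> i. As i $ 1 $ 1) = a" and c1: "(\<chi> i. As i $ 2 $ 2) = c"
      by (simp_all add: As_def vec_eq_iff)
    have qA: "x \<bullet> (A *v x) = (1/4) * (b \<bullet> x)^2 - (d \<bullet> x)^2" for x
      using quadM[of x] dM[of x] by (simp add: power2_eq_square inner_commute)
    have "x \<bullet> (A *v x) + b \<bullet> x + 1 = det (mat 1 + (\<Sum>i\<in>UNIV. x $ i *\<^sub>R As i))" for x
      unfolding det_diag_sum[OF D] a1 c1
      by (simp add: qA a_def c_def inner_add_left inner_diff_left power2_eq_square algebra_simps)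
    with D show "\<exists>As :: 'n \<Rightarrow> real^2^2. (\<forall>i. diagonal_mat (As i)) \<and>
            (\<forall>x :: real^'n. x \<bullet> (A *v x) + b \<bullet> x + 1
               = det (mat 1 + (\<Sum>i\<in>UNIV. x $ i *\<^sub>R As i)))" by blast
  qed
qed

end
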